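(* For $i=1,2$ let $A_i\in M_{g_i,n_i}(\mathbb{Z})$ be a simple totally unimodular matrix and let $Q_i$ be a positive definite quadratic form of rank $g_i$ (a symmetric $g_i\times g_i$ real matrix) which is well-suited for $A_i$. Then $$Q=\begin{pmatrix}Q_1&0\\0&Q_2\end{pmatrix}\ \text{ is well-suited for }\ A=\begin{pmatrix}A_1&0\\0&A_2\end{pmatrix}.$$
   Context: A real matrix is totally unimodular if every square submatrix has determinant $-1,0$ or $1$; it is simple if it has no zero column and no two proportional columns. For a simple totally unimodular $A\in M_{g,n}(\mathbb{Z})$, a symmetric matrix $Q\in M_{g,g}(\mathbb{R})$ is well-suited for $A$ if $Q$ is positive definite and for every $\xi\in\mathbb{Z}^g\setminus\{0\}$ one has $Q(\xi)=\xi^tQ\xi\ge1$, with equality if and only if $\xi$ or $-\xi$ is a column vector of $A$. *)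

theory Defs
  imports Jordan_Normal_Form.Determinant Jordan_Normal_Form.DL_Submatrix
begin

definition totally_unimodular :: "int mat \<Rightarrow> bool" where
  "totally_unimodular A \<longleftrightarrow>
     (\<forall>I J. I \<subseteq> {..<dim_row A} \<longrightarrow> J \<subseteq> {..<dim_col A} \<longrightarrow> card I = card J \<longrightarrow>
        det (submatrix A I J) \<in> {-1, 0, 1})"

definition simple_mat :: "int mat \<Rightarrow> bool" where
  "simple_mat A \<longleftrightarrow>
     (\<forall>j<dim_col A. col A j \<noteq> 0\<^sub>v (dim_row A)) \<and>
     (\<forall>j<dim_col A. \<forall>k<dim_col A. j \<noteq> k \<longrightarrow>
        \<not> (\<exists>c::real. map_vec real_of_int (col A j) = c \<cdot>\<^sub>v map_vec real_of_int (col A k)))"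

definition pos_def_mat :: "real mat \<Rightarrow> bool" where
  "pos_def_mat Q \<longleftrightarrow>
     (\<forall>x \<in> carrier_vec (dim_row Q). x \<noteq> 0\<^sub>v (dim_row Q) \<longrightarrow> x \<bullet> (Q *\<^sub>v x) > 0)"

definition well_suited :: "real mat \<Rightarrow> int mat \<Rightarrow> bool" where
  "well_suited Q A \<longleftrightarrow>
     Q \<in> carrier_mat (dim_row A) (dim_row A) \<and> Q\<^sup>T = Q \<and> pos_def_mat Q \<and>
     (\<forall>\<xi> \<in> carrier_vec (dim_row A). \<xi> \<noteq> 0\<^sub>v (dim_row A) \<longrightarrow>
        (let q = map_vec real_of_int \<xi> \<bullet> (Q *\<^sub>v map_vec real_of_int \<xi>) in
          q \<ge> 1 \<and> (q = 1 \<longleftrightarrow> (\<exists>j<dim_col A. col A j = \<xi> \<or> col A j = - \<xi>))))"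

end

theory Submission
  imports Defs
begin

lemma uminus_append_vec: "- (a @\<^sub>v b) = (- a) @\<^sub>v (- b)"
  by (rule eq_vecI) auto

lemma map_append_vec: "map_vec f (a @\<^sub>v b) = map_vec f a @\<^sub>v map_vec f b"
  by (rule eq_vecI) auto

lemma zero_append_vec: "0\<^sub>v n1 @\<^sub>v 0\<^sub>v n2 = 0\<^sub>v (n1 + n2)"
  by (rule eq_vecI) auto

lemma map_zero_vec_real: "map_vec real_of_int (0\<^sub>v n) = 0\<^sub>v n"
  by (rule eq_vecI) auto

lemma quad_block:
  fixes Q1 Q2 :: "real mat"
  assumes "Q1 \<in> carrier_mat g1 g1" "Q2 \<in> carrier_mat g2 g2"
    "x1 \<in> carrier_vec g1" "x2 \<in> carrier_vec g2"
  shows "(x1 @\<^sub>v x2) \<bullet> (four_block_mat Q1 (0\<^sub>m g1 g2) (0\<^sub>m g2 g1) Q2 *\<^sub>v (x1 @\<^sub>v x2))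
         = x1 \<bullet> (Q1 *\<^sub>v x1) + x2 \<bullet> (Q2 *\<^sub>v x2)"
proof -
  have "four_block_mat Q1 (0\<^sub>m g1 g2) (0\<^sub>m g2 g1) Q2 *\<^sub>v (x1 @\<^sub>v x2)
      = (Q1 *\<^sub>v x1 + 0\<^sub>m g1 g2 *\<^sub>v x2) @\<^sub>v (0\<^sub>m g2 g1 *\<^sub>v x1 + Q2 *\<^sub>v x2)"
    by (rule four_block_mat_mult_vec) (use assms in auto)
  also have "\<dots> = (Q1 *\<^sub>v x1) @\<^sub>v (Q2 *\<^sub>v x2)"
    using assms by auto
  finally show ?thesis
    using assms by (simp add: scalar_prod_append[of _ g1 _ g2])
qed

lemma pd_nonneg:
  fixes Q :: "real mat"
  assumes "pos_def_mat Q" "Q \<in> carrier_mat n n" "x \<in> carrier_vec n"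
  shows "x \<bullet> (Q *\<^sub>v x) \<ge> 0"
proof (cases "x = 0\<^sub>v n")
  case True then show ?thesis using assms by auto
next
  case False then show ?thesis using assms unfolding pos_def_mat_def by force
qed

lemma col_block:
  fixes A1 A2 :: "int mat"
  assumes "A1 \<in> carrier_mat g1 n1" "A2 \<in> carrier_mat g2 n2"
    "x1 \<in> carrier_vec g1" "x2 \<in> carrier_vec g2"
  shows "(\<exists>j<dim_col (four_block_mat A1 (0\<^sub>m g1 n2) (0\<^sub>m g2 n1) A2).
            col (four_block_mat A1 (0\<^sub>m g1 n2) (0\<^sub>m g2 n1) A2) j = x1 @\<^sub>v x2 \<or>
            col (four_block_mat A1 (0\<^sub>m g1 n2) (0\<^sub>m g2 n1) A2) j = - (x1 @\<^sub>v x2))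
    \<longleftrightarrow> (x2 = 0\<^sub>v g2 \<and> (\<exists>j<n1. col A1 j = x1 \<or> col A1 j = - x1)) \<or>
        (x1 = 0\<^sub>v g1 \<and> (\<exists>j<n2. col A2 j = x2 \<or> col A2 j = - x2))"
  (is "?L \<longleftrightarrow> ?R")
proof
  assume ?L
  then obtain j where j: "j < n1 + n2" and
    c: "col (four_block_mat A1 (0\<^sub>m g1 n2) (0\<^sub>m g2 n1) A2) j = x1 @\<^sub>v x2 \<or>
        col (four_block_mat A1 (0\<^sub>m g1 n2) (0\<^sub>m g2 n1) A2) j = - (x1 @\<^sub>v x2)"
    using assms by auto
  show ?R
  proof (cases "j < n1")
    case True
    have "col (four_block_mat A1 (0\<^sub>m g1 n2) (0\<^sub>m g2 n1) A2) j = col A1 j @\<^sub>v 0\<^sub>v g2"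
      using col_four_block_mat(1)[of A1 g1 n1 "0\<^sub>m g1 n2" n2 "0\<^sub>m g2 n1" g2 A2] assms True by auto
    then have "(col A1 j = x1 \<and> 0\<^sub>v g2 = x2) \<or> (col A1 j = - x1 \<and> 0\<^sub>v g2 = - x2)"
      using c assms True append_vec_eq[of "col A1 j" g1 x1] append_vec_eq[of "col A1 j" g1 "-x1"]
      by (auto simp: uminus_append_vec)
    then have "x2 = 0\<^sub>v g2 \<and> (col A1 j = x1 \<or> col A1 j = - x1)"
      using assms by (metis uminus_uminus_vec uminus_zero_vec_eq)
    then show ?thesis using True by auto
  next
    case False
    have "col (four_block_mat A1 (0\<^sub>m g1 n2) (0\<^sub>m g2 n1) A2) j = 0\<^sub>v g1 @\<^sub>v col A2 (j - n1)"
      using col_four_block_mat(2)[of A1 g1 n1 "0\<^sub>m g1 n2" n2 "0\<^sub>m g2 n1" g2 A2] assms False j by auto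
    then have "(col A2 (j-n1) = x2 \<and> 0\<^sub>v g1 = x1) \<or> (col A2 (j-n1) = - x2 \<and> 0\<^sub>v g1 = - x1)"
      using c assms append_vec_eq[of "0\<^sub>v g1" g1 x1] append_vec_eq[of "0\<^sub>v g1" g1 "-x1"]
      by (auto simp: uminus_append_vec)
    then have "x1 = 0\<^sub>v g1 \<and> (col A2 (j-n1) = x2 \<or> col A2 (j-n1) = - x2)"
      using assms by (metis uminus_uminus_vec uminus_zero_vec_eq)
    then show ?thesis using False j by (intro disjI2) (auto intro!: exI[of _ "j - n1"])
  qed
next
  assume ?R
  then show ?L
  proof
    assume h: "x2 = 0\<^sub>v g2 \<and> (\<exists>j<n1. col A1 j = x1 \<or> col A1 j = - x1)"
    then obtain j where j: "j < n1" "col A1 j = x1 \<or> col A1 j = - x1" by auto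
    have "col (four_block_mat A1 (0\<^sub>m g1 n2) (0\<^sub>m g2 n1) A2) j = col A1 j @\<^sub>v 0\<^sub>v g2"
      using col_four_block_mat(1)[of A1 g1 n1 "0\<^sub>m g1 n2" n2 "0\<^sub>m g2 n1" g2 A2] assms j by auto
    then show ?L using h j assms
      by (intro exI[of _ j]) (auto simp: uminus_append_vec)
  next
    assume h: "x1 = 0\<^sub>v g1 \<and> (\<exists>j<n2. col A2 j = x2 \<or> col A2 j = - x2)"
    then obtain j where j: "j < n2" "col A2 j = x2 \<or> col A2 j = - x2" by auto
    have "col (four_block_mat A1 (0\<^sub>m g1 n2) (0\<^sub>m g2 n1) A2) (n1 + j) = 0\<^sub>v g1 @\<^sub>v col A2 j"
      using col_four_block_mat(2)[of A1 g1 n1 "0\<^sub>m g1 n2" n2 "0\<^sub>m g2 n1" g2 A2 "n1+j"] assms j by auto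
    then show ?L using h j assms
      by (intro exI[of _ "n1 + j"]) (auto simp: uminus_append_vec)
  qed
qed

theorem lemma4p2p3:
  fixes A1 A2 :: "int mat" and Q1 Q2 :: "real mat" and g1 g2 n1 n2 :: nat
  assumes "A1 \<in> carrier_mat g1 n1" and "A2 \<in> carrier_mat g2 n2"
    and "simple_mat A1" and "simple_mat A2"
    and "totally_unimodular A1" and "totally_unimodular A2"
    and "Q1 \<in> carrier_mat g1 g1" and "Q2 \<in> carrier_mat g2 g2"
    and "Q1\<^sup>T = Q1" and "Q2\<^sup>T = Q2"
    and "pos_def_mat Q1" and "pos_def_mat Q2"
    and "well_suited Q1 A1" and "well_suited Q2 A2"
  shows "well_suited (four_block_mat Q1 (0\<^sub>m g1 g2) (0\<^sub>m g2 g1) Q2)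
                     (four_block_mat A1 (0\<^sub>m g1 n2) (0\<^sub>m g2 n1) A2)"
proof -
  define Q where "Q = four_block_mat Q1 (0\<^sub>m g1 g2) (0\<^sub>m g2 g1) Q2"
  define A where "A = four_block_mat A1 (0\<^sub>m g1 n2) (0\<^sub>m g2 n1) A2"
  have dA: "dim_row A = g1 + g2" using assms(1,2) unfolding A_def by auto
  have QC: "Q \<in> carrier_mat (g1+g2) (g1+g2)" using assms(7,8) unfolding Q_def by auto
  have QT: "Q\<^sup>T = Q"
    unfolding Q_def using assms(7-10)
    by (subst transpose_four_block_mat[OF assms(7) zero_carrier_mat zero_carrier_mat assms(8)]) auto
  have split: "\<And>x :: 'a vec. x \<in> carrier_vec (g1+g2) \<Longrightarrow>
      x = vec_first x g1 @\<^sub>v vec_last x g2" by simp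
  have PD: "pos_def_mat Q"
    unfolding pos_def_mat_def
  proof (intro ballI impI)
    fix x :: "real vec"
    assume x: "x \<in> carrier_vec (dim_row Q)" "x \<noteq> 0\<^sub>v (dim_row Q)"
    define x1 where "x1 = vec_first x g1"
    define x2 where "x2 = vec_last x g2"
    have xe: "x = x1 @\<^sub>v x2" using x QC split unfolding x1_def x2_def by auto
    have c: "x1 \<in> carrier_vec g1" "x2 \<in> carrier_vec g2" unfolding x1_def x2_def by auto
    have nz: "x1 \<noteq> 0\<^sub>v g1 \<or> x2 \<noteq> 0\<^sub>v g2" using x xe QC zero_append_vec by auto
    have "x \<bullet> (Q *\<^sub>v x) = x1 \<bullet> (Q1 *\<^sub>v x1) + x2 \<bullet> (Q2 *\<^sub>v x2)"
      unfolding xe Q_def by (rule quad_block) (use assms c in auto)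
    moreover have "x1 \<bullet> (Q1 *\<^sub>v x1) \<ge> 0" "x2 \<bullet> (Q2 *\<^sub>v x2) \<ge> 0"
      using pd_nonneg assms c by blast+
    moreover have "x1 \<bullet> (Q1 *\<^sub>v x1) > 0 \<or> x2 \<bullet> (Q2 *\<^sub>v x2) > 0"
      using nz assms(7,8,11,12) c unfolding pos_def_mat_def by auto
    ultimately show "x \<bullet> (Q *\<^sub>v x) > 0" by linarith
  qed
  have W1: "\<And>\<xi>. \<xi> \<in> carrier_vec g1 \<Longrightarrow> \<xi> \<noteq> 0\<^sub>v g1 \<Longrightarrow>
     map_vec real_of_int \<xi> \<bullet> (Q1 *\<^sub>v map_vec real_of_int \<xi>) \<ge> 1 \<and>
     (map_vec real_of_int \<xi> \<bullet> (Q1 *\<^sub>v map_vec real_of_int \<xi>) = 1 \<longleftrightarrow> (\<exists>j<n1. col A1 j = \<xi> \<or> col A1 j = - \<xi>))"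
    using assms(13,1) unfolding well_suited_def Let_def by auto
  have W2: "\<And>\<xi>. \<xi> \<in> carrier_vec g2 \<Longrightarrow> \<xi> \<noteq> 0\<^sub>v g2 \<Longrightarrow>
     map_vec real_of_int \<xi> \<bullet> (Q2 *\<^sub>v map_vec real_of_int \<xi>) \<ge> 1 \<and>
     (map_vec real_of_int \<xi> \<bullet> (Q2 *\<^sub>v map_vec real_of_int \<xi>) = 1 \<longleftrightarrow> (\<exists>j<n2. col A2 j = \<xi> \<or> col A2 j = - \<xi>))"
    using assms(14,2) unfolding well_suited_def Let_def by auto
  have main: "map_vec real_of_int \<xi> \<bullet> (Q *\<^sub>v map_vec real_of_int \<xi>) \<ge> 1 \<and>
     (map_vec real_of_int \<xi> \<bullet> (Q *\<^sub>v map_vec real_of_int \<xi>) = 1 \<longleftrightarrow>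
       (\<exists>j<dim_col A. col A j = \<xi> \<or> col A j = - \<xi>))"
    if x: "\<xi> \<in> carrier_vec (g1+g2)" "\<xi> \<noteq> 0\<^sub>v (g1+g2)" for \<xi>
  proof -
    define x1 where "x1 = vec_first \<xi> g1"
    define x2 where "x2 = vec_last \<xi> g2"
    have xe: "\<xi> = x1 @\<^sub>v x2" using x split unfolding x1_def x2_def by auto
    have c: "x1 \<in> carrier_vec g1" "x2 \<in> carrier_vec g2" unfolding x1_def x2_def by auto
    have nz: "x1 \<noteq> 0\<^sub>v g1 \<or> x2 \<noteq> 0\<^sub>v g2" using x xe zero_append_vec by auto
    define q1 where "q1 = map_vec real_of_int x1 \<bullet> (Q1 *\<^sub>v map_vec real_of_int x1)"
    define q2 where "q2 = map_vec real_of_int x2 \<bullet> (Q2 *\<^sub>v map_vec real_of_int x2)"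
    have q: "map_vec real_of_int \<xi> \<bullet> (Q *\<^sub>v map_vec real_of_int \<xi>) = q1 + q2"
      unfolding xe Q_def map_append_vec q1_def q2_def by (rule quad_block) (use assms c in auto)
    have cols: "(\<exists>j<dim_col A. col A j = \<xi> \<or> col A j = - \<xi>) \<longleftrightarrow>
       (x2 = 0\<^sub>v g2 \<and> (\<exists>j<n1. col A1 j = x1 \<or> col A1 j = - x1)) \<or>
        (x1 = 0\<^sub>v g1 \<and> (\<exists>j<n2. col A2 j = x2 \<or> col A2 j = - x2))"
      unfolding xe A_def by (rule col_block) (use assms c in auto)
    have q10: "q1 \<ge> 0" "q2 \<ge> 0" unfolding q1_def q2_def
      using pd_nonneg assms c by auto
    show ?thesis
    proof (cases "x1 = 0\<^sub>v g1")
      case True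
      then have "x2 \<noteq> 0\<^sub>v g2" using nz by auto
      moreover have "q1 = 0" using True assms unfolding q1_def by (simp add: map_zero_vec_real)
      ultimately show ?thesis using W2[of x2] c q cols True unfolding q2_def by auto
    next
      case F1: False
      show ?thesis
      proof (cases "x2 = 0\<^sub>v g2")
        case True
        moreover have "q2 = 0" using True assms unfolding q2_def by (simp add: map_zero_vec_real)
        ultimately show ?thesis using W1[of x1] c q cols F1 unfolding q1_def by auto
      next
        case False
        then show ?thesis using W1[of x1] W2[of x2] c q cols F1 unfolding q1_def q2_def by auto
      qed
    qed
  qed
  show ?thesis
    unfolding Q_def[symmetric] A_def[symmetric] well_suited_def Let_def dA
    using QC QT PD main by auto
qed

end
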